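(* Let $\beta>\alpha>0$ and let $q=(q_1,q_2,q_3,q_4)\in(\mathbb{R}^2)^4$ be a convex non-collinear central configuration of the planar Newtonian 4-body problem with masses $m_1=m_2=\beta$, $m_3=m_4=\alpha$, the vertices being labelled so that $q_1,q_2,q_3,q_4$ is the cyclic order around the convex quadrilateral (so the equal masses occupy adjacent vertices). If $r_{14}=r_{23}$, then the configuration is symmetric and forms an isosceles trapezoid: the side $q_1q_2$ is parallel to the side $q_3q_4$ (and $r_{14}=r_{23}$).
   Context: Bodies have positions $q_i\in\mathbb{R}^2$ and masses $m_i>0$, $i=1,\dots,4$; $r_{ij}=\|q_i-q_j\|$. The Newtonian potential is $U(q)=\sum_{i<j}m_im_j/r_{ij}$ (gravitational constant $1$). A configuration $q$ with $q_i\neq q_j$ for all $i\neq j$ and center of mass $\sum_i m_iq_i=0$ is a central configuration if there is a constant $\lambda$ with $\frac{1}{m_i}\frac{\partial U}{\partial q_i}=\lambda q_i$ for all $i$, i.e. $\sum_{j\neq i} m_j\frac{q_j-q_i}{r_{ij}^3}=\lambda q_i$. "Convex non-collinear" means the four points are the vertices of a strictly convex quadrilateral (no three of them collinear). *)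

theory Defs
  imports "HOL-Analysis.Analysis"
begin

definition cross2 :: "real^2 \<Rightarrow> real^2 \<Rightarrow> real" where
  "cross2 a b = a$1 * b$2 - a$2 * b$1"

definition orient :: "real^2 \<Rightarrow> real^2 \<Rightarrow> real^2 \<Rightarrow> real" where
  "orient a b c = cross2 (b - a) (c - a)"

definition central_config :: "(nat \<Rightarrow> real) \<Rightarrow> (nat \<Rightarrow> real^2) \<Rightarrow> bool" where
  "central_config m q \<longleftrightarrow>
     (\<forall>i\<in>{1..4}. \<forall>j\<in>{1..4}. i \<noteq> j \<longrightarrow> q i \<noteq> q j) \<and>
     (\<Sum>i=1..4. m i *\<^sub>R q i) = 0 \<and>
     (\<exists>lam. \<forall>i\<in>{1..4}.
        (\<Sum>j\<in>{1..4} - {i}. (m j / dist (q i) (q j) ^ 3) *\<^sub>R (q j - q i)) = lam *\<^sub>R q i)"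

text \<open>q1,q2,q3,q4 are, in this cyclic order, the vertices of a strictly convex
  quadrilateral (no three collinear): for every side, the two remaining vertices
  lie strictly on the same side of the line through that side.\<close>
definition convex_quad :: "real^2 \<Rightarrow> real^2 \<Rightarrow> real^2 \<Rightarrow> real^2 \<Rightarrow> bool" where
  "convex_quad a b c d \<longleftrightarrow>
     orient a b c * orient a b d > 0 \<and>
     orient b c d * orient b c a > 0 \<and>
     orient c d a * orient c d b > 0 \<and>
     orient d a b * orient d a c > 0"

end

theory Submission imports Defs begin

lemma dist2: "dist (x::real^2) y ^ 2 = (x$1-y$1)^2 + (x$2-y$2)^2"
  unfolding dist_norm power2_norm_eq_inner by (simp add: inner_vec_def sum_2 power2_eq_square)

lemma conv:
  fixes ma mb mc md xa xb xc xd lam kb kc kd M :: real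
  assumes "ma*xa + mb*xb + mc*xc + md*xd = 0" "M = ma+mb+mc+md" "M \<noteq> 0"
    "mb*kb*(xb-xa) + mc*kc*(xc-xa) + md*kd*(xd-xa) = lam*xa"
  shows "mb*(kb+lam/M)*(xb-xa) + mc*(kc+lam/M)*(xc-xa) + md*(kd+lam/M)*(xd-xa) = 0"
proof -
  define c where "c = lam/M"
  have "mb*(kb+c)*(xb-xa) + mc*(kc+c)*(xc-xa) + md*(kd+c)*(xd-xa)
      = (mb*kb*(xb-xa) + mc*kc*(xc-xa) + md*kd*(xd-xa)) + c*((ma*xa + mb*xb + mc*xc + md*xd) - M*xa)"
    using assms(2) by (simp add: algebra_simps)
  also have "\<dots> = lam*xa - c*M*xa" using assms(1,4) by simp
  also have "\<dots> = 0" using assms(3) by (simp add: c_def)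
  finally show ?thesis by (simp add: c_def)
qed

lemma crossl:
  fixes b c d Sb Sc Sd xa xb xc xd ya yb yc yd :: real
  assumes "b*Sb*(xb-xa) + c*Sc*(xc-xa) + d*Sd*(xd-xa) = 0"
    "b*Sb*(yb-ya) + c*Sc*(yc-ya) + d*Sd*(yd-ya) = 0"
  shows "c*Sc*((xb-xa)*(yc-ya)-(yb-ya)*(xc-xa)) + d*Sd*((xb-xa)*(yd-ya)-(yb-ya)*(xd-xa)) = 0"
proof -
  have "c*Sc*((xb-xa)*(yc-ya)-(yb-ya)*(xc-xa)) + d*Sd*((xb-xa)*(yd-ya)-(yb-ya)*(xd-xa))
    = (xb-xa)*(b*Sb*(yb-ya) + c*Sc*(yc-ya) + d*Sd*(yd-ya)) - (yb-ya)*(b*Sb*(xb-xa) + c*Sc*(xc-xa) + d*Sd*(xd-xa))"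
    by (simp add: algebra_simps)
  then show ?thesis using assms by simp
qed

lemma final_alg:
  fixes w1 w2 w3 w4 cA cB cT :: real
  assumes "cA*w1 + cT*w2 = 0" "cT*w1 + cB*w2 = 0" "cA*w3 + cT*w4 = 0" "cT*w3 + cB*w4 = 0"
    "w1 - w2 + w3 - w4 = 0" "w1*w2 > 0" "w4*w1 > 0" "w3*w4 > 0"
    "cT = 0 \<and> cA = 0 \<and> cB = 0 \<Longrightarrow> w1 = w2"
  shows "w1 = w2"
proof (cases "w1*w4 = w3*w2")
  case True
  have "(w1-w2)*(w4+w2) = 0" proof -
    have "w3 = w2 + w4 - w1" using assms(5) by simp
    hence "w1*w4 = w2*(w2+w4-w1)" using True by (simp add: mult.commute)
    thus ?thesis by (simp add: algebra_simps)
  qed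
  moreover have "w4*w2 > 0" using assms(6,7)
    by (smt (verit, best) mult_pos_neg mult_neg_pos zero_less_mult_iff)
  hence "w4 + w2 \<noteq> 0" by (smt (verit) mult_minus_left zero_less_mult_iff)
  ultimately show ?thesis by simp
next
  case False
  have "cA*(w1*w4 - w3*w2) = 0" using assms(1,3)
    by (smt (verit) mult.commute mult.left_commute right_diff_distrib)
  moreover have "cT*(w1*w4 - w3*w2) = 0" using assms(2,4)
    by (smt (verit) mult.commute mult.left_commute right_diff_distrib)
  moreover have "cB*(w1*w4-w3*w2) = 0" using assms(2,4)
    by (smt (verit) mult.commute mult.left_commute right_diff_distrib)
  ultimately show ?thesis using False assms(9) by simp
qed

lemma cube_inj: "(1::real)/a^3 = 1/b^3 \<Longrightarrow> a \<ge> 0 \<Longrightarrow> b \<ge> 0 \<Longrightarrow> a = b"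
  by (simp add: power_eq_iff_eq_base)

lemma cross_sq:
  fixes x1 y1 x2 y2 x3 y3 :: real
  shows "4*((x2-x1)*(y3-y1)-(y2-y1)*(x3-x1))^2 = 4*((x2-x1)^2+(y2-y1)^2)*((x3-x1)^2+(y3-y1)^2)
     - (((x3-x1)^2+(y3-y1)^2) + ((x2-x1)^2+(y2-y1)^2) - ((x3-x2)^2+(y3-y2)^2))^2"
  by (simp add: power2_eq_square algebra_simps)

lemma geo:
  fixes x1 y1 x2 y2 x3 y3 x4 y4 :: real
  assumes "(x3-x1)^2+(y3-y1)^2 = (x4-x1)^2+(y4-y1)^2"
    "(x3-x2)^2+(y3-y2)^2 = (x4-x2)^2+(y4-y2)^2"
    "((x2-x1)*(y3-y1)-(y2-y1)*(x3-x1)) * ((x2-x1)*(y4-y1)-(y2-y1)*(x4-x1)) > 0"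
  shows "(x2-x1)*(y3-y1)-(y2-y1)*(x3-x1) = (x2-x1)*(y4-y1)-(y2-y1)*(x4-x1)"
proof -
  let ?x = "(x2-x1)*(y3-y1)-(y2-y1)*(x3-x1)"
  let ?y = "(x2-x1)*(y4-y1)-(y2-y1)*(x4-x1)"
  have "4*?x^2 = 4*?y^2"
    using cross_sq[of x2 x1 y3 y1 y2 x3] cross_sq[of x2 x1 y4 y1 y2 x4] assms(1,2) by simp
  hence "?x^2 = ?y^2" by simp
  hence "?x = ?y \<or> ?x = - ?y" using power2_eq_iff by blast
  thus ?thesis using assms(3)
    by (smt (verit) mult_minus_right zero_less_mult_iff)
qed


theorem theorem1p2:
  fixes m :: "nat \<Rightarrow> real" and q :: "nat \<Rightarrow> real^2" and \<alpha> \<beta> :: real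
  assumes "0 < \<alpha>" and "\<alpha> < \<beta>"
    and "m 1 = \<beta>" and "m 2 = \<beta>" and "m 3 = \<alpha>" and "m 4 = \<alpha>"
    and "central_config m q"
    and "convex_quad (q 1) (q 2) (q 3) (q 4)"
    and "dist (q 1) (q 4) = dist (q 2) (q 3)"
  shows "cross2 (q 2 - q 1) (q 4 - q 3) = 0 \<and> dist (q 1) (q 4) = dist (q 2) (q 3)"
proof -
  have a: "\<alpha> > 0" "\<beta> > 0" using assms(1,2) by auto
  have S4: "{1..4::nat} = {1,2,3,4}" by auto
  have CC: "(\<Sum>i=1..4. m i *\<^sub>R q i) = 0"
    and "\<exists>lam. \<forall>i\<in>{1..4}.
        (\<Sum>j\<in>{1..4} - {i}. (m j / dist (q i) (q j) ^ 3) *\<^sub>R (q j - q i)) = lam *\<^sub>R q i"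
    using assms(7) unfolding central_config_def by auto
  then obtain lam where L: "\<forall>i\<in>{1..4}.
        (\<Sum>j\<in>{1..4} - {i}. (m j / dist (q i) (q j) ^ 3) *\<^sub>R (q j - q i)) = lam *\<^sub>R q i" by blast
  define X where "X i = q i $ 1" for i
  define Y where "Y i = q i $ 2" for i
  define k where "k i j = 1 / dist (q i) (q j) ^ 3" for i j
  have kc: "k j i = k i j" for i j by (simp add: k_def dist_commute)
  have e1: "(m 2 / dist (q 1) (q 2) ^ 3) *\<^sub>R (q 2 - q 1) + ((m 3 / dist (q 1) (q 3) ^ 3) *\<^sub>R (q 3 - q 1)
      + (m 4 / dist (q 1) (q 4) ^ 3) *\<^sub>R (q 4 - q 1)) = lam *\<^sub>R q 1"
    using L unfolding S4 by (simp add: insert_Diff_if)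
  have e2: "(m 1 / dist (q 2) (q 1) ^ 3) *\<^sub>R (q 1 - q 2) + ((m 3 / dist (q 2) (q 3) ^ 3) *\<^sub>R (q 3 - q 2)
      + (m 4 / dist (q 2) (q 4) ^ 3) *\<^sub>R (q 4 - q 2)) = lam *\<^sub>R q 2"
    using L unfolding S4 by (simp add: insert_Diff_if)
  have e3: "(m 1 / dist (q 3) (q 1) ^ 3) *\<^sub>R (q 1 - q 3) + ((m 2 / dist (q 3) (q 2) ^ 3) *\<^sub>R (q 2 - q 3)
      + (m 4 / dist (q 3) (q 4) ^ 3) *\<^sub>R (q 4 - q 3)) = lam *\<^sub>R q 3"
    using L unfolding S4 by (simp add: insert_Diff_if)
  have e4: "(m 1 / dist (q 4) (q 1) ^ 3) *\<^sub>R (q 1 - q 4) + ((m 2 / dist (q 4) (q 2) ^ 3) *\<^sub>R (q 2 - q 4)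
      + (m 3 / dist (q 4) (q 3) ^ 3) *\<^sub>R (q 3 - q 4)) = lam *\<^sub>R q 4"
    using L unfolding S4 by (simp add: insert_Diff_if)
  have e1': "(\<beta> * k 1 2) *\<^sub>R (q 2 - q 1) + ((\<alpha> * k 1 3) *\<^sub>R (q 3 - q 1) + (\<alpha> * k 1 4) *\<^sub>R (q 4 - q 1)) = lam *\<^sub>R q 1"
    using e1 assms(3-6) by (simp add: k_def dist_commute)
  have e2': "(\<beta> * k 1 2) *\<^sub>R (q 1 - q 2) + ((\<alpha> * k 2 3) *\<^sub>R (q 3 - q 2) + (\<alpha> * k 2 4) *\<^sub>R (q 4 - q 2)) = lam *\<^sub>R q 2"
    using e2 assms(3-6) by (simp add: k_def dist_commute)
  have e3': "(\<beta> * k 1 3) *\<^sub>R (q 1 - q 3) + ((\<beta> * k 2 3) *\<^sub>R (q 2 - q 3) + (\<alpha> * k 3 4) *\<^sub>R (q 4 - q 3)) = lam *\<^sub>R q 3"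
    using e3 assms(3-6) by (simp add: k_def dist_commute)
  have e4': "(\<beta> * k 1 4) *\<^sub>R (q 1 - q 4) + ((\<beta> * k 2 4) *\<^sub>R (q 2 - q 4) + (\<alpha> * k 3 4) *\<^sub>R (q 3 - q 4)) = lam *\<^sub>R q 4"
    using e4 assms(3-6) by (simp add: k_def dist_commute)
  have CC': "\<beta> *\<^sub>R q 1 + \<beta> *\<^sub>R q 2 + \<alpha> *\<^sub>R q 3 + \<alpha> *\<^sub>R q 4 = 0"
    using CC assms(3-6) unfolding S4 by (simp add: add.assoc)
  have comp: "\<And>u v :: real^2. u = v \<Longrightarrow> u$1 = v$1 \<and> u$2 = v$2" by simp
  have e1x: "\<beta>*k 1 2*(X 2 - X 1) + \<alpha>*k 1 3*(X 3 - X 1) + \<alpha>*k 1 4*(X 4 - X 1) = lam * X 1"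
   and e1y: "\<beta>*k 1 2*(Y 2 - Y 1) + \<alpha>*k 1 3*(Y 3 - Y 1) + \<alpha>*k 1 4*(Y 4 - Y 1) = lam * Y 1"
    using comp[OF e1'] unfolding X_def Y_def by (simp_all add: algebra_simps)
  have e2x: "\<beta>*k 1 2*(X 1 - X 2) + \<alpha>*k 2 3*(X 3 - X 2) + \<alpha>*k 2 4*(X 4 - X 2) = lam * X 2"
   and e2y: "\<beta>*k 1 2*(Y 1 - Y 2) + \<alpha>*k 2 3*(Y 3 - Y 2) + \<alpha>*k 2 4*(Y 4 - Y 2) = lam * Y 2"
    using comp[OF e2'] unfolding X_def Y_def by (simp_all add: algebra_simps)
  have e3x: "\<beta>*k 1 3*(X 1 - X 3) + \<beta>*k 2 3*(X 2 - X 3) + \<alpha>*k 3 4*(X 4 - X 3) = lam * X 3"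
   and e3y: "\<beta>*k 1 3*(Y 1 - Y 3) + \<beta>*k 2 3*(Y 2 - Y 3) + \<alpha>*k 3 4*(Y 4 - Y 3) = lam * Y 3"
    using comp[OF e3'] unfolding X_def Y_def by (simp_all add: algebra_simps)
  have e4x: "\<beta>*k 1 4*(X 1 - X 4) + \<beta>*k 2 4*(X 2 - X 4) + \<alpha>*k 3 4*(X 3 - X 4) = lam * X 4"
   and e4y: "\<beta>*k 1 4*(Y 1 - Y 4) + \<beta>*k 2 4*(Y 2 - Y 4) + \<alpha>*k 3 4*(Y 3 - Y 4) = lam * Y 4"
    using comp[OF e4'] unfolding X_def Y_def by (simp_all add: algebra_simps)
  have cx: "\<beta>*X 1 + \<beta>*X 2 + \<alpha>*X 3 + \<alpha>*X 4 = 0" and cy: "\<beta>*Y 1 + \<beta>*Y 2 + \<alpha>*Y 3 + \<alpha>*Y 4 = 0"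
    using comp[OF CC'] assms(3-6) unfolding X_def Y_def by simp_all
  define M where "M = \<beta>+\<beta>+\<alpha>+\<alpha>"
  have M0: "M \<noteq> 0" using a by (simp add: M_def)
  define c where "c = lam / M"
  note f1x = conv[of \<beta> "X 1" \<beta> "X 2" \<alpha> "X 3" \<alpha> "X 4" M "k 1 2" "k 1 3" "k 1 4" lam, OF cx M_def M0 e1x, folded c_def]
  note f1y = conv[of \<beta> "Y 1" \<beta> "Y 2" \<alpha> "Y 3" \<alpha> "Y 4" M "k 1 2" "k 1 3" "k 1 4" lam, OF cy M_def M0 e1y, folded c_def]
  have cx2: "\<beta>*X 2 + \<beta>*X 1 + \<alpha>*X 3 + \<alpha>*X 4 = 0" and cy2: "\<beta>*Y 2 + \<beta>*Y 1 + \<alpha>*Y 3 + \<alpha>*Y 4 = 0"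
    using cx cy by linarith+
  note f2x = conv[of \<beta> "X 2" \<beta> "X 1" \<alpha> "X 3" \<alpha> "X 4" M "k 1 2" "k 2 3" "k 2 4" lam, OF cx2 M_def M0 e2x, folded c_def]
  note f2y = conv[of \<beta> "Y 2" \<beta> "Y 1" \<alpha> "Y 3" \<alpha> "Y 4" M "k 1 2" "k 2 3" "k 2 4" lam, OF cy2 M_def M0 e2y, folded c_def]
  have M3: "M = \<alpha>+\<beta>+\<beta>+\<alpha>" by (simp add: M_def)
  have cx3: "\<alpha>*X 3 + \<beta>*X 1 + \<beta>*X 2 + \<alpha>*X 4 = 0" and cy3: "\<alpha>*Y 3 + \<beta>*Y 1 + \<beta>*Y 2 + \<alpha>*Y 4 = 0"
    and cx4: "\<alpha>*X 4 + \<beta>*X 1 + \<beta>*X 2 + \<alpha>*X 3 = 0" and cy4: "\<alpha>*Y 4 + \<beta>*Y 1 + \<beta>*Y 2 + \<alpha>*Y 3 = 0"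
    using cx cy by linarith+
  note f3x = conv[of \<alpha> "X 3" \<beta> "X 1" \<beta> "X 2" \<alpha> "X 4" M "k 1 3" "k 2 3" "k 3 4" lam, OF cx3 M3 M0 e3x, folded c_def]
  note f3y = conv[of \<alpha> "Y 3" \<beta> "Y 1" \<beta> "Y 2" \<alpha> "Y 4" M "k 1 3" "k 2 3" "k 3 4" lam, OF cy3 M3 M0 e3y, folded c_def]
  note f4x = conv[of \<alpha> "X 4" \<beta> "X 1" \<beta> "X 2" \<alpha> "X 3" M "k 1 4" "k 2 4" "k 3 4" lam, OF cx4 M3 M0 e4x, folded c_def]
  note f4y = conv[of \<alpha> "Y 4" \<beta> "Y 1" \<beta> "Y 2" \<alpha> "Y 3" M "k 1 4" "k 2 4" "k 3 4" lam, OF cy4 M3 M0 e4y, folded c_def]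
  note g1 = crossl[OF f1x f1y]
  note g2 = crossl[OF f2x f2y]
  have f4x': "\<alpha>*(k 3 4 + c)*(X 3 - X 4) + \<beta>*(k 1 4 + c)*(X 1 - X 4) + \<beta>*(k 2 4 + c)*(X 2 - X 4) = 0"
    using f4x by linarith
  have f4y': "\<alpha>*(k 3 4 + c)*(Y 3 - Y 4) + \<beta>*(k 1 4 + c)*(Y 1 - Y 4) + \<beta>*(k 2 4 + c)*(Y 2 - Y 4) = 0"
    using f4y by linarith
  note g4 = crossl[OF f4x' f4y']
  have f3x': "\<alpha>*(k 3 4 + c)*(X 4 - X 3) + \<beta>*(k 1 3 + c)*(X 1 - X 3) + \<beta>*(k 2 3 + c)*(X 2 - X 3) = 0"
    using f3x by linarith
  have f3y': "\<alpha>*(k 3 4 + c)*(Y 4 - Y 3) + \<beta>*(k 1 3 + c)*(Y 1 - Y 3) + \<beta>*(k 2 3 + c)*(Y 2 - Y 3) = 0"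
    using f3y by linarith
  note g3 = crossl[OF f3x' f3y']
  define zx where "zx = (X 2 - X 1)*(Y 3 - Y 1) - (Y 2 - Y 1)*(X 3 - X 1)"
  define zy where "zy = (X 2 - X 1)*(Y 4 - Y 1) - (Y 2 - Y 1)*(X 4 - X 1)"
  define zu where "zu = (X 4 - X 3)*(Y 1 - Y 3) - (Y 4 - Y 3)*(X 1 - X 3)"
  define zv where "zv = (X 4 - X 3)*(Y 2 - Y 3) - (Y 4 - Y 3)*(X 2 - X 3)"
  have k23: "k 2 3 = k 1 4" using assms(9) by (simp add: k_def)
  have h1: "(k 1 3 + c)*zx + (k 1 4 + c)*zy = 0"
  proof -
    have "\<alpha>*((k 1 3 + c)*zx + (k 1 4 + c)*zy) = 0" using g1 unfolding zx_def zy_def by (simp add: algebra_simps)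
    thus ?thesis using a by simp
  qed
  have h2: "(k 1 4 + c)*zx + (k 2 4 + c)*zy = 0"
  proof -
    have "-\<alpha>*((k 1 4 + c)*zx + (k 2 4 + c)*zy) = 0" using g2 k23 unfolding zx_def zy_def by (simp add: algebra_simps)
    thus ?thesis using a by simp
  qed
  have h3: "(k 1 3 + c)*zu + (k 1 4 + c)*zv = 0"
  proof -
    have "\<beta>*((k 1 3 + c)*zu + (k 1 4 + c)*zv) = 0" using g3 k23 unfolding zu_def zv_def by (simp add: algebra_simps)
    thus ?thesis using a by simp
  qed
  have h4: "(k 1 4 + c)*zu + (k 2 4 + c)*zv = 0"
  proof -
    have "-\<beta>*((k 1 4 + c)*zu + (k 2 4 + c)*zv) = 0" using g4 unfolding zu_def zv_def by (simp add: algebra_simps)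
    thus ?thesis using a by simp
  qed
  have h5: "zx - zy + zu - zv = 0" unfolding zx_def zy_def zu_def zv_def by (simp add: algebra_simps)
  have o123: "orient (q 1) (q 2) (q 3) = zx" and o124: "orient (q 1) (q 2) (q 4) = zy"
    and o234: "orient (q 2) (q 3) (q 4) = zv" and o231: "orient (q 2) (q 3) (q 1) = zx"
    and o341: "orient (q 3) (q 4) (q 1) = zu" and o342: "orient (q 3) (q 4) (q 2) = zv"
    unfolding orient_def cross2_def zx_def zy_def zu_def zv_def X_def Y_def by (simp_all add: algebra_simps)
  have h6: "zx*zy > 0" and h7: "zv*zx > 0" and h8: "zu*zv > 0"
    using assms(8) unfolding convex_quad_def o123 o124 o234 o231 o341 o342 by auto
  have deg: "zx = zy" if H: "k 1 4 + c = 0 \<and> k 1 3 + c = 0 \<and> k 2 4 + c = 0"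
  proof -
    have "k 1 3 = k 1 4" "k 2 3 = k 2 4" using H k23 by auto
    hence "dist (q 1) (q 3) = dist (q 1) (q 4)" "dist (q 2) (q 3) = dist (q 2) (q 4)"
      unfolding k_def using cube_inj by auto
    hence "dist (q 1) (q 3)^2 = dist (q 1) (q 4)^2" "dist (q 2) (q 3)^2 = dist (q 2) (q 4)^2" by auto
    hence d1: "(X 3 - X 1)^2 + (Y 3 - Y 1)^2 = (X 4 - X 1)^2 + (Y 4 - Y 1)^2"
      and d2: "(X 3 - X 2)^2 + (Y 3 - Y 2)^2 = (X 4 - X 2)^2 + (Y 4 - Y 2)^2"
      unfolding dist2 X_def Y_def by (simp_all add: power2_commute)
    show ?thesis using geo[OF d1 d2] h6 unfolding zx_def zy_def by simp
  qed
  have "zx = zy" using final_alg[OF h1 h2 h3 h4 h5 h6 h7 h8] deg by blast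
  moreover have "cross2 (q 2 - q 1) (q 4 - q 3) = zy - zx"
    unfolding cross2_def zx_def zy_def X_def Y_def by (simp add: algebra_simps)
  ultimately show ?thesis using assms(9) by simp
qed

end
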